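(* For any $t\in(0,1)$ there exists a real symmetric matrix $\mathbf{A}$ of size $\lceil(4t)^{-1}\rceil$ such that, for any positive integers $n_{\mathrm{v}},k$ with $n_{\mathrm{v}}k<(8t)^{-1}$ (i.e. stochastic Lanczos quadrature using fewer than $(8t)^{-1}$ matrix–vector products) and any unit vectors $\mathbf{v}_1,\dots,\mathbf{v}_{n_{\mathrm{v}}}$, the output satisfies $$d_{\mathrm{W}}\Big(\Phi[\mathbf{A}],\tfrac1{n_{\mathrm{v}}}\textstyle\sum_{i=1}^{n_{\mathrm{v}}}\mathrm{GQ}_k(\Psi[\mathbf{A},\mathbf{v}_i])\Big)>t\,I[\mathbf{A}],$$ where $I[\mathbf{A}]=|\lambda_{\max}[\mathbf{A}]-\lambda_{\min}[\mathbf{A}]|$.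
   Context: $\Phi[\mathbf{A}](x)=\frac1n\#\{i:\lambda_i[\mathbf{A}]\le x\}$ is the CESM of an $n\times n$ symmetric $\mathbf{A}$; $\Psi[\mathbf{A},\mathbf{v}](x)=\mathbf{v}^{\mathsf T}\mathbb{1}[\mathbf{A}\le x]\mathbf{v}$ where $\mathbb{1}[\mathbf{A}\le x]$ is the orthogonal projector onto eigenvectors with eigenvalues $\le x$. $\mathrm{GQ}_k(\mu)$ is the $k$-point Gaussian quadrature rule of $\mu$ (the discrete distribution $\sum_{j=1}^k d_j\mathbb{1}[\theta_j\le x]$ whose moments agree with those of $\mu$ up to degree $2k-1$), which for $\mu=\Psi[\mathbf{A},\mathbf{v}]$ is computed from $k$ steps of the Lanczos algorithm (using $k$ matrix–vector products). $d_{\mathrm{W}}(\mu,\nu)=\int|\mu(x)-\nu(x)|\,dx$. *)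

theory Defs
  imports "HOL-Analysis.Analysis"
begin

definition sym_mat :: "real^'n^'n \<Rightarrow> bool" where
  "sym_mat A \<longleftrightarrow> transpose A = A"

text \<open>lam is a list (with multiplicity) of the eigenvalues of A: there is an
  orthonormal eigenbasis U with A U_i = lam_i U_i.\<close>
definition is_eig_list :: "real^'n^'n \<Rightarrow> ('n \<Rightarrow> real) \<Rightarrow> bool" where
  "is_eig_list A lam \<longleftrightarrow> (\<exists>U :: 'n \<Rightarrow> real^'n.
      (\<forall>i j. U i \<bullet> U j = (if i = j then 1 else 0)) \<and> (\<forall>i. A *v U i = lam i *\<^sub>R U i))"

definition eigvals :: "real^'n^'n \<Rightarrow> 'n \<Rightarrow> real" where
  "eigvals A = (SOME lam. is_eig_list A lam)"

definition lam_max :: "real^'n^'n \<Rightarrow> real" where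
  "lam_max A = Max (range (eigvals A))"

definition lam_min :: "real^'n^'n \<Rightarrow> real" where
  "lam_min A = Min (range (eigvals A))"

definition CESM :: "real^'n^'n \<Rightarrow> real \<Rightarrow> real" where
  "CESM A x = real (card {i. eigvals A i \<le> x}) / real CARD('n)"

definition orth_proj :: "(real^'n) set \<Rightarrow> real^'n \<Rightarrow> real^'n" where
  "orth_proj S v = (THE w. w \<in> S \<and> (\<forall>u\<in>S. (v - w) \<bullet> u = 0))"

definition eig_le_space :: "real^'n^'n \<Rightarrow> real \<Rightarrow> (real^'n) set" where
  "eig_le_space A x = span {u. \<exists>l\<le>x. A *v u = l *\<^sub>R u}"

definition WCESM :: "real^'n^'n \<Rightarrow> real^'n \<Rightarrow> real \<Rightarrow> real" where
  "WCESM A v x = v \<bullet> orth_proj (eig_le_space A x) v"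

definition step_dist :: "nat \<Rightarrow> (nat \<Rightarrow> real) \<Rightarrow> (nat \<Rightarrow> real) \<Rightarrow> real \<Rightarrow> real" where
  "step_dist k d \<theta> x = (\<Sum>j<k. d j * (if \<theta> j \<le> x then 1 else 0))"

text \<open>p-th moment of a distribution given by its (nondecreasing, right-continuous)
  distribution function mu: the Lebesgue-Stieltjes integral of x^p d mu(x).\<close>
definition moment :: "(real \<Rightarrow> real) \<Rightarrow> nat \<Rightarrow> real" where
  "moment \<mu> p = integral\<^sup>L (interval_measure \<mu>) (\<lambda>x. x ^ p)"

definition GQ :: "nat \<Rightarrow> (real \<Rightarrow> real) \<Rightarrow> real \<Rightarrow> real" where
  "GQ k \<mu> = (THE G. (\<exists>d \<theta>. (\<forall>j. 0 \<le> d j) \<and> G = step_dist k d \<theta>) \<and>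
                     (\<forall>p < 2 * k. moment G p = moment \<mu> p))"

definition dW :: "(real \<Rightarrow> real) \<Rightarrow> (real \<Rightarrow> real) \<Rightarrow> real" where
  "dW \<mu> \<nu> = integral\<^sup>L lborel (\<lambda>x. \<bar>\<mu> x - \<nu> x\<bar>)"

end

theory Submission
  imports Defs "HOL-Probability.Distribution_Functions" "HOL-Computational_Algebra.Polynomial"
begin



definition gstep :: "'a set \<Rightarrow> ('a \<Rightarrow> real) \<Rightarrow> ('a \<Rightarrow> real) \<Rightarrow> real \<Rightarrow> real" where
  "gstep J w a x = (\<Sum>j\<in>J. w j * (if a j \<le> x then 1 else 0))"

lemma gstep_mono:
  assumes "\<forall>j\<in>J. 0 \<le> w j" "x \<le> y"
  shows "gstep J w a x \<le> gstep J w a y"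
  unfolding gstep_def using assms by (intro sum_mono) auto

lemma ind_right_cont: "continuous (at_right x) (\<lambda>y::real. if c \<le> y then 1 else (0::real))"
proof (cases "c \<le> x")
  case True
  have "\<forall>\<^sub>F y in at_right x. (if c \<le> y then 1 else (0::real)) = 1"
    using True by (auto simp: eventually_at_right_less eventually_at_filter intro!: eventually_at_rightI[of x "x+1"])
  then show ?thesis unfolding continuous_within using True
    by (simp add: tendsto_eventually)
next
  case False
  have "\<forall>\<^sub>F y in at_right x. (if c \<le> y then 1 else (0::real)) = 0"
    using False by (auto intro!: eventually_at_rightI[of x c])
  then show ?thesis unfolding continuous_within using False
    by (simp add: tendsto_eventually)
qed

lemma gstep_right_cont: "continuous (at_right x) (gstep J w a)"
  unfolding gstep_def[abs_def]
  by (intro continuous_sum continuous_mult continuous_const ind_right_cont)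

lemma gstep_below:
  assumes "finite J" "\<forall>j\<in>J. x < a j"
  shows "gstep J w a x = 0"
  unfolding gstep_def using assms by (intro sum.neutral) auto

lemma gstep_above:
  assumes "finite J" "\<forall>j\<in>J. a j \<le> x"
  shows "gstep J w a x = sum w J"
  unfolding gstep_def using assms by (intro sum.cong) auto

lemma gstep_at_bot:
  assumes "finite J"
  shows "(gstep J w a \<longlongrightarrow> 0) at_bot"
proof -
  define L where "L = Min (insert 0 (a ` J))"
  have "\<forall>\<^sub>F x in at_bot. gstep J w a x = 0"
    unfolding eventually_at_bot_dense
  proof (intro exI[of _ L] allI impI)
    fix x assume "x < L"
    have "\<forall>j\<in>J. x < a j"
    proof
      fix j assume "j \<in> J"
      then have "L \<le> a j" unfolding L_def using assms by (intro Min_le) auto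
      then show "x < a j" using \<open>x < L\<close> by linarith
    qed
    then show "gstep J w a x = 0" using gstep_below assms by blast
  qed
  then show ?thesis by (simp add: tendsto_eventually)
qed

lemma gstep_at_top:
  assumes "finite J"
  shows "(gstep J w a \<longlongrightarrow> sum w J) at_top"
proof -
  define R where "R = Max (insert 0 (a ` J))"
  have "\<forall>\<^sub>F x in at_top. gstep J w a x = sum w J"
    unfolding eventually_at_top_linorder
  proof (intro exI[of _ R] allI impI)
    fix x assume "R \<le> x"
    have "\<forall>j\<in>J. a j \<le> x"
    proof
      fix j assume "j \<in> J"
      then have "a j \<le> R" unfolding R_def using assms by (intro Max_ge) auto
      then show "a j \<le> x" using \<open>R \<le> x\<close> by linarith
    qed
    then show "gstep J w a x = sum w J" using gstep_above assms by blast
  qed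
  then show ?thesis by (simp add: tendsto_eventually)
qed

lemma moment_gstep:
  assumes fin: "finite J" and w: "\<forall>j\<in>J. 0 \<le> w j"
  shows "moment (gstep J w a) p = (\<Sum>j\<in>J. w j * a j ^ p)"
proof -
  let ?F = "gstep J w a"
  let ?P = "point_measure J (\<lambda>j. ennreal (w j))"
  let ?M = "distr ?P borel a"
  have mono: "\<And>x y. x \<le> y \<Longrightarrow> ?F x \<le> ?F y" using gstep_mono w by blast
  have f1: "finite_borel_measure (interval_measure ?F)"
    by (rule finite_borel_measure_interval_measure[OF mono gstep_right_cont gstep_at_bot[OF fin]
          gstep_at_top[OF fin]]) (use w in \<open>auto intro: sum_nonneg\<close>)
  have meas: "a \<in> measurable ?P borel" by simp
  interpret P: finite_measure ?P
    by (rule finite_measureI) (simp add: emeasure_point_measure_finite fin space_point_measure)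
  have f2: "finite_borel_measure ?M"
    unfolding finite_borel_measure_def finite_borel_measure_axioms_def
    by (auto intro!: P.finite_measure_distr meas)
  have c1: "cdf (interval_measure ?F) = ?F"
    by (rule cdf_interval_measure[OF mono gstep_right_cont gstep_at_bot[OF fin]])
  have c2: "cdf ?M = ?F"
  proof
    fix x
    have "cdf ?M x = measure ?P (a -` {..x} \<inter> space ?P)"
      unfolding cdf_def by (simp add: measure_distr)
    also have "a -` {..x} \<inter> space ?P = {j\<in>J. a j \<le> x}" by (auto simp: space_point_measure)
    also have "measure ?P {j\<in>J. a j \<le> x} = sum w {j\<in>J. a j \<le> x}"
      using fin w by (subst measure_point_measure_finite_if) auto
    also have "\<dots> = ?F x" unfolding gstep_def using fin
      by (simp add: sum.inter_filter[symmetric] if_distrib cong: if_cong)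
    finally show "cdf ?M x = ?F x" .
  qed
  have eq: "interval_measure ?F = ?M"
    by (rule cdf_unique'[OF f1 f2]) (simp add: c1 c2)
  have "moment ?F p = integral\<^sup>L ?M (\<lambda>x. x ^ p)"
    unfolding moment_def eq ..
  also have "\<dots> = integral\<^sup>L ?P (\<lambda>j. a j ^ p)"
    by (rule integral_distr) auto
  also have "\<dots> = (\<Sum>j\<in>J. w j * a j ^ p)"
    using fin w by (subst lebesgue_integral_point_measure_finite) auto
  finally show ?thesis .
qed




lemma poly_as_sum:
  fixes q :: "real poly"
  assumes "degree q < N"
  shows "poly q z = (\<Sum>p<N. coeff q p * z ^ p)"
proof -
  have "poly q z = (\<Sum>p\<le>degree q. coeff q p * z ^ p)" by (rule poly_altdef)
  also have "\<dots> = (\<Sum>p<N. coeff q p * z ^ p)"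
    using assms by (intro sum.mono_neutral_left) (auto simp: coeff_eq_0)
  finally show ?thesis .
qed

lemma sum_poly_from_moments:
  fixes q :: "real poly"
  assumes "\<forall>p<N. (\<Sum>j\<in>J. a j * x j ^ p) = (\<Sum>j\<in>J'. b j * y j ^ p)" "degree q < N"
  shows "(\<Sum>j\<in>J. a j * poly q (x j)) = (\<Sum>j\<in>J'. b j * poly q (y j))"
proof -
  have "(\<Sum>j\<in>J. a j * poly q (x j)) = (\<Sum>p<N. coeff q p * (\<Sum>j\<in>J. a j * x j ^ p))"
    using assms(2) by (simp add: poly_as_sum sum_distrib_left sum_distrib_right sum.swap[of _ J] mult_ac)
  also have "\<dots> = (\<Sum>p<N. coeff q p * (\<Sum>j\<in>J'. b j * y j ^ p))"
    using assms(1) by simp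
  also have "\<dots> = (\<Sum>j\<in>J'. b j * poly q (y j))"
    using assms(2) by (simp add: poly_as_sum sum_distrib_left sum_distrib_right sum.swap[of _ J'] mult_ac)
  finally show ?thesis .
qed

lemma regroup:
  fixes d :: "'a \<Rightarrow> real"
  assumes "finite S" "finite T" "\<theta> ` S \<subseteq> T"
  shows "(\<Sum>j\<in>S. d j * f (\<theta> j)) = (\<Sum>y\<in>T. (\<Sum>j\<in>{j\<in>S. \<theta> j = y}. d j) * f y)"
proof -
  have "(\<Sum>j\<in>S. d j * f (\<theta> j)) = (\<Sum>y\<in>T. (\<Sum>j\<in>{j\<in>S. \<theta> j = y}. d j * f (\<theta> j)))"
    using sum.group[OF assms, of "\<lambda>j. d j * f (\<theta> j)"] by simp
  also have "\<dots> = (\<Sum>y\<in>T. (\<Sum>j\<in>{j\<in>S. \<theta> j = y}. d j) * f y)"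
    by (intro sum.cong refl) (simp add: sum_distrib_right)
  finally show ?thesis .
qed

lemma poly_prod_lin: "poly (\<Prod>u\<in>V. [:-u, 1:]) z = (\<Prod>u\<in>V. z - (u::real))"
  by (simp add: poly_prod algebra_simps)

lemma degree_prod_lin: "finite V \<Longrightarrow> degree (\<Prod>u\<in>V. [:-u, 1::real:]) \<le> card V"
proof -
  assume "finite V"
  then have "degree (\<Prod>u\<in>V. [:-u, 1::real:]) \<le> sum (degree \<circ> (\<lambda>u. [:-u, 1::real:])) V"
    by (rule degree_prod_sum_le)
  also have "\<dots> = card V" by simp
  finally show ?thesis .
qed

lemma mass_unique:
  fixes d d' \<theta> \<theta>' :: "nat \<Rightarrow> real"
  assumes mom: "\<forall>p<2*k. (\<Sum>j<k. d j * \<theta> j ^ p) = (\<Sum>j<k. d' j * \<theta>' j ^ p)"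
    and U: "U = \<theta> ` {..<k} \<union> \<theta>' ` {..<k}" and y: "y \<in> U"
  shows "(\<Sum>j\<in>{j\<in>{..<k}. \<theta> j = y}. d j) = (\<Sum>j\<in>{j\<in>{..<k}. \<theta>' j = y}. d' j)"
proof -
  define Q where "Q = (\<Prod>u\<in>U - {y}. [:-u, 1::real:])"
  have finU: "finite U" using U by auto
  have "card U \<le> card (\<theta> ` {..<k}) + card (\<theta>' ` {..<k})" unfolding U by (rule card_Un_le)
  also have "\<dots> \<le> k + k" by (intro add_mono) (auto intro: card_image_le[THEN order_trans])
  finally have cU: "card U \<le> 2 * k" by simp
  have "degree Q \<le> card (U - {y})" unfolding Q_def using finU by (intro degree_prod_lin) auto
  also have "\<dots> = card U - 1" using y finU by simp
  finally have dQ: "degree Q < 2 * k" using cU y finU card_gt_0_iff[of U] by auto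
  have pQ: "poly Q z = 0 \<longleftrightarrow> z \<in> U - {y}" for z
    unfolding Q_def poly_prod_lin using finU by (auto simp: prod_zero_iff)
  have pQy: "poly Q y \<noteq> 0" using pQ by auto
  have e1: "(\<Sum>j<k. d j * poly Q (\<theta> j)) = (\<Sum>j<k. d' j * poly Q (\<theta>' j))"
    by (rule sum_poly_from_moments[OF mom dQ])
  have g: "(\<Sum>j<k. e j * poly Q (\<phi> j)) = (\<Sum>j\<in>{j\<in>{..<k}. \<phi> j = y}. e j) * poly Q y"
    if "\<phi> ` {..<k} \<subseteq> U" for e \<phi> :: "nat \<Rightarrow> real"
  proof -
    have "(\<Sum>j<k. e j * poly Q (\<phi> j)) = (\<Sum>u\<in>U. (\<Sum>j\<in>{j\<in>{..<k}. \<phi> j = u}. e j) * poly Q u)"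
      by (rule regroup[OF _ finU that]) simp
    also have "\<dots> = (\<Sum>j\<in>{j\<in>{..<k}. \<phi> j = y}. e j) * poly Q y"
    proof -
      have "(\<Sum>u\<in>U - {y}. (\<Sum>j\<in>{j\<in>{..<k}. \<phi> j = u}. e j) * poly Q u) = 0"
        by (rule sum.neutral) (simp add: pQ)
      then show ?thesis by (simp add: sum.remove[OF finU y])
    qed
    finally show ?thesis .
  qed
  have "(\<Sum>j\<in>{j\<in>{..<k}. \<theta> j = y}. d j) * poly Q y = (\<Sum>j\<in>{j\<in>{..<k}. \<theta>' j = y}. d' j) * poly Q y"
    using e1 g[of \<theta> d] g[of \<theta>' d'] U by auto
  then show ?thesis using pQy by simp
qed

lemma step_unique:
  fixes d d' \<theta> \<theta>' :: "nat \<Rightarrow> real"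
  assumes mom: "\<forall>p<2*k. (\<Sum>j<k. d j * \<theta> j ^ p) = (\<Sum>j<k. d' j * \<theta>' j ^ p)"
  shows "step_dist k d \<theta> = step_dist k d' \<theta>'"
proof
  fix x
  define U where "U = \<theta> ` {..<k} \<union> \<theta>' ` {..<k}"
  have finU: "finite U" unfolding U_def by auto
  have "step_dist k d \<theta> x = (\<Sum>y\<in>U. (\<Sum>j\<in>{j\<in>{..<k}. \<theta> j = y}. d j) * (if y \<le> x then 1 else 0))"
    unfolding step_dist_def by (rule regroup[OF _ finU]) (auto simp: U_def)
  also have "\<dots> = (\<Sum>y\<in>U. (\<Sum>j\<in>{j\<in>{..<k}. \<theta>' j = y}. d' j) * (if y \<le> x then 1 else 0))"
  proof (intro sum.cong refl)
    fix y assume "y \<in> U"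
    show "(\<Sum>j\<in>{j\<in>{..<k}. \<theta> j = y}. d j) * (if y \<le> x then 1 else 0) = (\<Sum>j\<in>{j\<in>{..<k}. \<theta>' j = y}. d' j) * (if y \<le> x then 1 else 0)"
      using mass_unique[OF mom U_def \<open>y \<in> U\<close>] by simp
  qed
  also have "\<dots> = step_dist k d' \<theta>' x"
    unfolding step_dist_def by (rule regroup[symmetric, OF _ finU]) (auto simp: U_def)
  finally show "step_dist k d \<theta> x = step_dist k d' \<theta>' x" .
qed




lemma order_lin: "order y [:-u, 1::real:] = (if y = u then 1 else 0)"
proof (cases "y = u")
  case True
  then show ?thesis using order_power_n_n[of u 1] by simp
next
  case False
  then show ?thesis by (intro order_0I[THEN trans]) auto
qed

lemma order_prod_lin:
  assumes "finite V"
  shows "order y (\<Prod>u\<in>V. [:-u, 1::real:]) = (if y \<in> V then 1 else 0)"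
  using assms
proof (induction V rule: finite_induct)
  case empty
  then show ?case by (simp add: order_0I)
next
  case (insert a V)
  have nz: "(\<Prod>u\<in>V. [:-u, 1::real:]) \<noteq> 0" using insert by (auto simp: prod_zero_iff)
  have "order y (\<Prod>u\<in>insert a V. [:-u, 1::real:]) = order y ([:-a, 1:] * (\<Prod>u\<in>V. [:-u, 1::real:]))"
    using insert by simp
  also have "\<dots> = order y [:-a, 1:] + order y (\<Prod>u\<in>V. [:-u, 1::real:])"
  proof (rule order_mult)
    have nz2: "[:-a, 1::real:] \<noteq> 0" by simp
    show "[:-a, 1:] * (\<Prod>u\<in>V. [:-u, 1::real:]) \<noteq> 0" using nz nz2 mult_eq_0_iff by blast
  qed
  finally show ?case using insert by (simp add: order_lin)
qed

lemma even_nonneg: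
  fixes r :: "real poly"
  assumes "r \<noteq> 0" "lead_coeff r > 0" "\<forall>z. even (order z r)"
  shows "poly r x \<ge> 0"
  using assms
proof (induction "degree r" arbitrary: r rule: less_induct)
  case less
  show ?case
  proof (cases "\<exists>z. poly r z = 0")
    case True
    then obtain z where z: "poly r z = 0" by blast
    then have "order z r \<noteq> 0" using less.prems order_root by blast
    moreover have "even (order z r)" using less.prems(3) by blast
    ultimately have "2 \<le> order z r" by presburger
    then have "[:-z, 1:] ^ 2 dvd r" using order_divides by blast
    then obtain r' where r': "r = [:-z, 1:] ^ 2 * r'" by (elim dvdE)
    have r'0: "r' \<noteq> 0" using r' less.prems by auto
    have dg: "degree r = 2 + degree r'" using r' r'0 by (simp add: degree_mult_eq degree_linear_power)
    have lc: "lead_coeff r' > 0" using r' less.prems by (simp add: lead_coeff_mult lead_coeff_power)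
    have ev: "\<forall>y. even (order y r')"
    proof
      fix y
      have "order y r = order y ([:-z, 1:] ^ 2) + order y r'"
        using r' less.prems by (simp add: order_mult)
      moreover have "even (order y ([:-z, 1:] ^ 2))"
      proof (cases "y = z")
        case True then show ?thesis using order_power_n_n[of z 2] by simp
      next
        case False then have "order y ([:-z, 1:] ^ 2) = 0" by (intro order_0I) auto
        then show ?thesis by simp
      qed
      moreover have "even (order y r)" using less.prems(3) by blast
      ultimately show "even (order y r')" by simp
    qed
    have "poly r' x \<ge> 0" using less.hyps[of r'] dg r'0 lc ev by simp
    then show ?thesis using r' by simp
  next
    case False
    show ?thesis
    proof (rule ccontr)
      assume neg: "\<not> poly r x \<ge> 0"
      obtain N where N: "\<forall>y\<ge>N. poly r y \<ge> lead_coeff r" using poly_pinfty_gt_lc less.prems by blast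
      define y where "y = max N x + 1"
      have "N \<le> y" unfolding y_def by linarith
      then have "poly r y \<ge> lead_coeff r" using N by blast
      then have "poly r y > 0" using less.prems(2) by linarith
      moreover have "x < y" unfolding y_def by linarith
      ultimately obtain u where "poly r u = 0" using poly_IVT_pos[of x y r] neg by force
      then show False using False by blast
    qed
  qed
qed




lemma orth_poly_exists:
  fixes w lam :: "'n::finite \<Rightarrow> real"
  assumes w: "\<forall>i. 0 \<le> w i"
  shows "\<exists>P. degree P = k \<and> lead_coeff P = 1 \<and>
     (\<forall>p<k. (\<Sum>i\<in>UNIV. w i * poly P (lam i) * lam i ^ p) = 0)"
proof -
  define f where "f p = (\<chi> i. sqrt (w i) * lam i ^ p)" for p
  obtain y z where y: "y \<in> span (f ` {..<k})" and z: "\<And>u. u \<in> span (f ` {..<k}) \<Longrightarrow> orthogonal z u"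
    and fk: "f k = y + z"
    using orthogonal_subspace_decomp_exists by blast
  define T where "T = range (\<lambda>c. \<Sum>p<k. c p *\<^sub>R f p)"
  have subT: "subspace T"
    unfolding subspace_def T_def
  proof (intro conjI ballI allI)
    show "0 \<in> range (\<lambda>c. \<Sum>p<k. c p *\<^sub>R f p)" by (rule range_eqI[of _ _ "\<lambda>_. 0"]) simp
  next
    fix a b assume "a \<in> range (\<lambda>c. \<Sum>p<k. c p *\<^sub>R f p)" "b \<in> range (\<lambda>c. \<Sum>p<k. c p *\<^sub>R f p)"
    then obtain c1 c2 where "a = (\<Sum>p<k. c1 p *\<^sub>R f p)" "b = (\<Sum>p<k. c2 p *\<^sub>R f p)" by auto
    then show "a + b \<in> range (\<lambda>c. \<Sum>p<k. c p *\<^sub>R f p)"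
      by (intro range_eqI[of _ _ "\<lambda>p. c1 p + c2 p"]) (simp add: sum.distrib scaleR_add_left)
  next
    fix r :: real and a assume "a \<in> range (\<lambda>c. \<Sum>p<k. c p *\<^sub>R f p)"
    then obtain c1 where "a = (\<Sum>p<k. c1 p *\<^sub>R f p)" by auto
    then show "r *\<^sub>R a \<in> range (\<lambda>c. \<Sum>p<k. c p *\<^sub>R f p)"
      by (intro range_eqI[of _ _ "\<lambda>p. r * c1 p"]) (simp add: scaleR_sum_right)
  qed
  have "f ` {..<k} \<subseteq> T"
  proof
    fix u assume "u \<in> f ` {..<k}"
    then obtain p0 where p0: "p0 < k" "u = f p0" by auto
    have "(\<Sum>p<k. (if p = p0 then 1 else 0) *\<^sub>R f p) = f p0"
    proof -
      have "(\<Sum>p<k. (if p = p0 then 1 else 0) *\<^sub>R f p) = (\<Sum>p<k. if p = p0 then f p else 0)"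
        by (intro sum.cong) auto
      then show ?thesis using p0 by simp
    qed
    then show "u \<in> T" unfolding T_def p0(2) by (intro range_eqI[of _ _ "\<lambda>p. if p = p0 then 1 else 0"]) simp
  qed
  then have "span (f ` {..<k}) \<subseteq> T" using subT by (rule span_minimal)
  then obtain c where c: "y = (\<Sum>p<k. c p *\<^sub>R f p)" using y unfolding T_def by auto
  define P where "P = monom 1 k - (\<Sum>p<k. monom (c p) p)"
  have coeffP: "coeff P n = (if n = k then 1 else 0) - (\<Sum>p<k. if n = p then c p else 0)" for n
    unfolding P_def by (simp add: coeff_sum coeff_monom)
  have cPk: "coeff P k = 1" by (simp add: coeffP)
  have "\<forall>n>k. coeff P n = 0" by (simp add: coeffP)
  then have "degree P \<le> k" by (intro degree_le) auto
  moreover have "k \<le> degree P" using cPk by (intro le_degree) simp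
  ultimately have dP: "degree P = k" by simp
  have polyP: "poly P x = x ^ k - (\<Sum>p<k. c p * x ^ p)" for x
    unfolding P_def by (simp add: poly_sum poly_monom)
  have zP: "z = (\<chi> i. sqrt (w i) * poly P (lam i))"
  proof -
    have "z = f k - y" using fk by simp
    also have "\<dots> = (\<chi> i. sqrt (w i) * poly P (lam i))"
    proof (subst vec_eq_iff, intro allI)
      fix i
      have "(f k - y) $ i = sqrt (w i) * lam i ^ k - (\<Sum>p<k. c p * (sqrt (w i) * lam i ^ p))"
        unfolding c by (simp add: f_def sum_component)
      also have "\<dots> = sqrt (w i) * (lam i ^ k - (\<Sum>p<k. c p * lam i ^ p))"
        by (simp add: right_diff_distrib sum_distrib_left mult.left_commute)
      finally show "(f k - y) $ i = (\<chi> i. sqrt (w i) * poly P (lam i)) $ i" by (simp add: polyP)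
    qed
    finally show ?thesis .
  qed
  have orth: "(\<Sum>i\<in>UNIV. w i * poly P (lam i) * lam i ^ p) = 0" if "p < k" for p
  proof -
    have "f p \<in> span (f ` {..<k})" using that by (intro span_base) auto
    then have "z \<bullet> f p = 0" using z orthogonal_def by blast
    moreover have "z \<bullet> f p = (\<Sum>i\<in>UNIV. w i * poly P (lam i) * lam i ^ p)"
      unfolding inner_vec_def inner_real_def
    proof (intro sum.cong refl)
      fix i
      have "sqrt (w i) * sqrt (w i) = w i" using w by simp
      then show "z $ i * f p $ i = w i * poly P (lam i) * lam i ^ p"
        unfolding zP f_def by (simp add: mult_ac)
    qed
    ultimately show ?thesis by simp
  qed
  show ?thesis using dP cPk orth by (intro exI[of _ P]) simp
qed




lemma orth_to_poly:
  fixes w lam :: "'n::finite \<Rightarrow> real" and P q :: "real poly"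
  assumes orth: "\<forall>p<k. (\<Sum>i\<in>UNIV. w i * poly P (lam i) * lam i ^ p) = 0"
    and dq: "degree q < k"
  shows "(\<Sum>i\<in>UNIV. w i * poly P (lam i) * poly q (lam i)) = 0"
proof -
  have m: "\<forall>p<k. (\<Sum>i\<in>UNIV. (w i * poly P (lam i)) * lam i ^ p) = (\<Sum>i\<in>{}. (0::real) * (0::real) ^ p)"
    using orth by simp
  show ?thesis using sum_poly_from_moments[OF m dq] by simp
qed

lemma roots_card:
  fixes w lam :: "'n::finite \<Rightarrow> real" and P :: "real poly"
  assumes w: "\<forall>i. 0 \<le> w i" and inj: "inj lam" and dP: "degree P = k" and lc: "lead_coeff P = 1"
    and orth: "\<forall>p<k. (\<Sum>i\<in>UNIV. w i * poly P (lam i) * lam i ^ p) = 0"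
    and big: "k < card {i. 0 < w i}"
  shows "card {x. poly P x = 0} = k"
proof -
  have P0: "P \<noteq> 0" using lc by auto
  define R where "R = {x. poly P x = 0}"
  have finR: "finite R" unfolding R_def using P0 by (rule poly_roots_finite)
  have cR: "card R \<le> k" unfolding R_def using card_poly_roots_bound[OF P0] dP by simp
  define Zo where "Zo = {x\<in>R. odd (order x P)}"
  have ZR: "Zo \<subseteq> R" unfolding Zo_def by auto
  have finZ: "finite Zo" using finR ZR finite_subset by blast
  have "k \<le> card Zo"
  proof (rule ccontr)
    assume "\<not> k \<le> card Zo"
    then have lt: "card Zo < k" by simp
    define q where "q = (\<Prod>u\<in>Zo. [:-u, 1::real:])"
    have dq: "degree q < k" unfolding q_def using degree_prod_lin[OF finZ] lt by linarith
    have S0: "(\<Sum>i\<in>UNIV. w i * poly P (lam i) * poly q (lam i)) = 0"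
      by (rule orth_to_poly[OF orth dq])
    have q0: "q \<noteq> 0" unfolding q_def using finZ by (auto simp: prod_zero_iff)
    have Pq0: "P * q \<noteq> 0" using P0 q0 by simp
    have lcq: "lead_coeff q = 1" unfolding q_def by (simp add: lead_coeff_prod)
    have lcPq: "lead_coeff (P * q) > 0" using lc lcq by (simp add: lead_coeff_mult)
    have ev: "\<forall>y. even (order y (P * q))"
    proof
      fix y
      have o: "order y (P * q) = order y P + (if y \<in> Zo then 1 else 0)"
        using order_mult[OF Pq0] order_prod_lin[OF finZ] unfolding q_def by simp
      show "even (order y (P * q))"
      proof (cases "y \<in> Zo")
        case True
        then show ?thesis using o unfolding Zo_def by simp
      next
        case False
        show ?thesis
        proof (cases "poly P y = 0")
          case True
          then have "y \<in> R" unfolding R_def by simp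
          then have "even (order y P)" using False unfolding Zo_def by simp
          then show ?thesis using o False by simp
        next
          case False2: False
          then have "order y P = 0" by (rule order_0I)
          then show ?thesis using o False by simp
        qed
      qed
    qed
    have nn: "poly (P * q) x \<ge> 0" for x by (rule even_nonneg[OF Pq0 lcPq ev])
    have terms: "\<forall>i\<in>UNIV. 0 \<le> w i * poly P (lam i) * poly q (lam i)"
      using nn w by (metis mult.assoc mult_nonneg_nonneg poly_mult)
    have allz: "\<forall>i. w i * poly P (lam i) * poly q (lam i) = 0"
      using S0 terms sum_nonneg_eq_0_iff[of UNIV "\<lambda>i. w i * poly P (lam i) * poly q (lam i)"] by simp
    obtain i where i: "0 < w i" "poly P (lam i) \<noteq> 0"
    proof (rule ccontr)
      assume "\<not> thesis"
      then have "\<forall>i. 0 < w i \<longrightarrow> poly P (lam i) = 0" using that by blast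
      then have "lam ` {i. 0 < w i} \<subseteq> R" unfolding R_def by auto
      then have "card (lam ` {i. 0 < w i}) \<le> card R" using finR by (rule card_mono[rotated])
      moreover have "card (lam ` {i. 0 < w i}) = card {i. 0 < w i}"
        using inj by (intro card_image) (auto intro: inj_on_subset)
      ultimately show False using cR big by linarith
    qed
    then have "poly q (lam i) = 0" using allz[rule_format, of i] by simp
    then have "lam i \<in> Zo" unfolding q_def poly_prod_lin using finZ by (auto simp: prod_zero_iff)
    then show False using i unfolding Zo_def R_def by simp
  qed
  moreover have "card Zo \<le> card R" using finR ZR by (rule card_mono)
  ultimately show ?thesis using cR unfolding R_def by simp
qed




lemma quad_from_nodes:
  fixes w lam :: "'n::finite \<Rightarrow> real" and P :: "real poly" and \<theta> :: "nat \<Rightarrow> real"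
  assumes w: "\<forall>i. 0 \<le> w i" and dP: "degree P = k" and P0: "P \<noteq> 0" and k: "0 < k"
    and orthq: "\<And>q. degree q < k \<Longrightarrow> (\<Sum>i\<in>UNIV. w i * poly P (lam i) * poly q (lam i)) = 0"
    and inj\<theta>: "inj_on \<theta> {..<k}" and root\<theta>: "\<forall>j<k. poly P (\<theta> j) = 0"
  shows "\<exists>d. (\<forall>j. 0 \<le> d j) \<and> (\<forall>p<2*k. (\<Sum>j<k. d j * \<theta> j ^ p) = (\<Sum>i\<in>UNIV. w i * lam i ^ p))"
proof -
  define ll where "ll j = (\<Prod>l\<in>{..<k}-{j}. [:-\<theta> l, 1::real:])" for j
  have pl: "poly (ll j) x = (\<Prod>l\<in>{..<k}-{j}. x - \<theta> l)" for j x
    unfolding ll_def poly_prod_lin[symmetric] by (simp add: poly_prod)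
  have zero: "poly (ll j) (\<theta> m) = 0" if "m < k" "m \<noteq> j" for j m
    unfolding pl using that by (auto simp: prod_zero_iff)
  define L where "L j = poly (ll j) (\<theta> j)" for j
  have Lnz: "L j \<noteq> 0" if "j < k" for j
  proof -
    have "\<theta> j \<noteq> \<theta> l" if "l \<in> {..<k}-{j}" for l
      using inj\<theta> that \<open>j < k\<close> by (auto dest: inj_onD)
    then show ?thesis unfolding L_def pl by (auto simp: prod_zero_iff)
  qed
  have dl: "degree (ll j) \<le> k - 1" if "j < k" for j
  proof -
    have "degree (ll j) \<le> sum (degree \<circ> (\<lambda>l. [:-\<theta> l, 1::real:])) ({..<k}-{j})"
      unfolding ll_def by (rule degree_prod_sum_le) simp
    also have "\<dots> = card ({..<k}-{j})" by simp
    also have "\<dots> = k - 1" using that by simp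
    finally show ?thesis .
  qed
  have interp: "poly r x = (\<Sum>j<k. poly r (\<theta> j) / L j * poly (ll j) x)" if dr: "degree r < k" for r x
  proof -
    define D where "D = r - (\<Sum>j<k. smult (poly r (\<theta> j) / L j) (ll j))"
    have dD: "degree D < k" unfolding D_def
    proof (rule degree_diff_less[OF dr])
      show "degree (\<Sum>j<k. smult (poly r (\<theta> j) / L j) (ll j)) < k"
      proof (rule degree_sum_less[OF _ k])
        fix j assume "j \<in> {..<k}"
        then have "degree (ll j) \<le> k - 1" using dl by simp
        then show "degree (smult (poly r (\<theta> j) / L j) (ll j)) < k"
          using k degree_smult_le[of "poly r (\<theta> j) / L j" "ll j"] by linarith
      qed
    qed
    have rootD: "poly D (\<theta> m) = 0" if "m < k" for m
    proof -
      have "(\<Sum>j<k. poly r (\<theta> j) / L j * poly (ll j) (\<theta> m)) = poly r (\<theta> m) / L m * poly (ll m) (\<theta> m)"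
      proof -
        have "(\<Sum>j\<in>{..<k}-{m}. poly r (\<theta> j) / L j * poly (ll j) (\<theta> m)) = 0"
          by (rule sum.neutral) (use zero that in auto)
        then show ?thesis using that by (simp add: sum.remove[of "{..<k}" m])
      qed
      also have "\<dots> = poly r (\<theta> m)" using Lnz[OF that] unfolding L_def by simp
      finally show ?thesis unfolding D_def by (simp add: poly_sum)
    qed
    have "D = 0"
    proof (rule ccontr)
      assume D0: "D \<noteq> 0"
      have "\<theta> ` {..<k} \<subseteq> {x. poly D x = 0}" using rootD by auto
      then have "card (\<theta> ` {..<k}) \<le> card {x. poly D x = 0}"
        using poly_roots_finite[OF D0] by (intro card_mono)
      also have "\<dots> \<le> degree D" by (rule card_poly_roots_bound[OF D0])
      finally show False using card_image[OF inj\<theta>] dD by simp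
    qed
    then have "r = (\<Sum>j<k. smult (poly r (\<theta> j) / L j) (ll j))" unfolding D_def by simp
    then have "poly r x = poly (\<Sum>j<k. smult (poly r (\<theta> j) / L j) (ll j)) x" by (rule arg_cong)
    then show ?thesis by (simp add: poly_sum)
  qed
  define e where "e j = (\<Sum>i\<in>UNIV. w i * poly (ll j) (lam i)) / L j" for j
  have ex1: "(\<Sum>i\<in>UNIV. w i * poly r (lam i)) = (\<Sum>j<k. e j * poly r (\<theta> j))" if "degree r < k" for r
  proof -
    have "(\<Sum>i\<in>UNIV. w i * poly r (lam i)) = (\<Sum>i\<in>UNIV. \<Sum>j<k. w i * (poly r (\<theta> j) / L j * poly (ll j) (lam i)))"
      by (subst interp[OF that]) (simp add: sum_distrib_left)
    also have "\<dots> = (\<Sum>j<k. \<Sum>i\<in>UNIV. w i * (poly r (\<theta> j) / L j * poly (ll j) (lam i)))"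
      by (rule sum.swap)
    also have "\<dots> = (\<Sum>j<k. e j * poly r (\<theta> j))"
      unfolding e_def by (intro sum.cong refl) (simp add: sum_distrib_left sum_divide_distrib mult_ac)
    finally show ?thesis .
  qed
  have ex2: "(\<Sum>i\<in>UNIV. w i * poly q (lam i)) = (\<Sum>j<k. e j * poly q (\<theta> j))" if dq: "degree q < 2 * k" for q
  proof -
    define s where "s = q div P"
    define r where "r = q mod P"
    have qe: "q = s * P + r" unfolding s_def r_def by simp
    have dr: "degree r < k"
    proof (cases "r = 0")
      case True then show ?thesis using k by simp
    next
      case False then show ?thesis unfolding r_def using degree_mod_less'[OF P0] dP by (simp add: r_def)
    qed
    have ds: "degree s < k"
    proof (cases "s = 0")
      case True then show ?thesis using k by simp
    next
      case False
      then have "degree (s * P) = degree s + k" using P0 dP by (simp add: degree_mult_eq)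
      moreover have "s * P = q - r" using qe by simp
      moreover have "degree (q - r) \<le> max (degree q) (degree r)" by (rule degree_diff_le_max)
      ultimately have "degree s + k \<le> max (degree q) (degree r)" by simp
      then show ?thesis using dq dr by (simp add: max_def split: if_splits)
    qed
    have "(\<Sum>i\<in>UNIV. w i * poly q (lam i)) =
          (\<Sum>i\<in>UNIV. w i * poly P (lam i) * poly s (lam i)) + (\<Sum>i\<in>UNIV. w i * poly r (lam i))"
      by (subst qe) (simp add: sum.distrib[symmetric] algebra_simps)
    also have "\<dots> = (\<Sum>j<k. e j * poly r (\<theta> j))" using orthq[OF ds] ex1[OF dr] by simp
    also have "\<dots> = (\<Sum>j<k. e j * poly q (\<theta> j))"
    proof (intro sum.cong refl)
      fix j assume "j \<in> {..<k}"
      have "poly q (\<theta> j) = poly (s * P + r) (\<theta> j)" using qe by (rule arg_cong)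
      then show "e j * poly r (\<theta> j) = e j * poly q (\<theta> j)" using root\<theta> \<open>j \<in> {..<k}\<close> by simp
    qed
    finally show ?thesis .
  qed
  have enn: "0 \<le> e j" if "j < k" for j
  proof -
    have "degree (ll j * ll j) \<le> degree (ll j) + degree (ll j)" by (rule degree_mult_le)
    then have "degree (ll j * ll j) < 2 * k" using dl[OF that] k by linarith
    from ex2[OF this] have "(\<Sum>i\<in>UNIV. w i * (poly (ll j) (lam i))^2) = (\<Sum>m<k. e m * (poly (ll j) (\<theta> m))^2)"
      by (simp add: power2_eq_square)
    also have "\<dots> = e j * (L j)^2"
    proof -
      have "(\<Sum>m\<in>{..<k}-{j}. e m * (poly (ll j) (\<theta> m))^2) = 0"
        by (rule sum.neutral) (use zero in auto)
      then show ?thesis using that by (simp add: sum.remove[of "{..<k}" j] L_def)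
    qed
    finally have eq: "(\<Sum>i\<in>UNIV. w i * (poly (ll j) (lam i))^2) = e j * (L j)^2" .
    have "0 \<le> (\<Sum>i\<in>UNIV. w i * (poly (ll j) (lam i))^2)" by (intro sum_nonneg) (simp add: w)
    then have "e j * (L j)^2 \<ge> 0" using eq by simp
    moreover have "(L j)^2 > 0" using Lnz[OF that] by simp
    ultimately show ?thesis by (simp add: zero_le_mult_iff)
  qed
  define d where "d j = (if j < k then e j else 0)" for j
  have "\<forall>j. 0 \<le> d j" unfolding d_def using enn by simp
  moreover have "\<forall>p<2*k. (\<Sum>j<k. d j * \<theta> j ^ p) = (\<Sum>i\<in>UNIV. w i * lam i ^ p)"
  proof (intro allI impI)
    fix p assume p: "p < 2 * k"
    have "degree (monom (1::real) p) < 2 * k" using p by (simp add: degree_monom_eq)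
    from ex2[OF this] show "(\<Sum>j<k. d j * \<theta> j ^ p) = (\<Sum>i\<in>UNIV. w i * lam i ^ p)"
      by (simp add: poly_monom d_def)
  qed
  ultimately show ?thesis by blast
qed




lemma step_dist_gstep: "step_dist k d \<theta> = gstep {..<k} d \<theta>"
  unfolding step_dist_def[abs_def] gstep_def[abs_def] ..

lemma gq_exists:
  fixes w lam :: "'n::finite \<Rightarrow> real"
  assumes w: "\<forall>i. 0 \<le> w i" and inj: "inj lam" and k: "0 < k"
  shows "\<exists>d \<theta>. (\<forall>j. 0 \<le> d j) \<and> (\<forall>p<2*k. (\<Sum>j<k. d j * \<theta> j ^ p) = (\<Sum>i\<in>UNIV. w i * lam i ^ p))"
proof (cases "card {i. 0 < w i} \<le> k")
  case True
  define I' where "I' = {i. 0 < w i}"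
  obtain h where h: "bij_betw h {0..<card I'} I'" using ex_bij_betw_nat_finite[of I'] by auto
  define d where "d j = (if j < card I' then w (h j) else 0)" for j
  define \<theta> where "\<theta> j = lam (h j)" for j
  have "\<forall>j. 0 \<le> d j" unfolding d_def using w by simp
  moreover have "(\<Sum>j<k. d j * \<theta> j ^ p) = (\<Sum>i\<in>UNIV. w i * lam i ^ p)" for p
  proof -
    have "(\<Sum>j<k. d j * \<theta> j ^ p) = (\<Sum>j\<in>{0..<card I'}. d j * \<theta> j ^ p)"
      using True I'_def by (intro sum.mono_neutral_right) (auto simp: d_def)
    also have "\<dots> = (\<Sum>j\<in>{0..<card I'}. w (h j) * lam (h j) ^ p)"
      by (intro sum.cong refl) (auto simp: d_def \<theta>_def)
    also have "\<dots> = (\<Sum>i\<in>I'. w i * lam i ^ p)"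
      by (rule sum.reindex_bij_betw[OF h])
    also have "\<dots> = (\<Sum>i\<in>UNIV. w i * lam i ^ p)"
      unfolding I'_def by (intro sum.mono_neutral_left) (use w in \<open>auto simp: order.order_iff_strict\<close>)
    finally show ?thesis .
  qed
  ultimately show ?thesis by blast
next
  case False
  then have big: "k < card {i. 0 < w i}" by simp
  obtain P where dP: "degree P = k" and lc: "lead_coeff P = 1"
    and orth: "\<forall>p<k. (\<Sum>i\<in>UNIV. w i * poly P (lam i) * lam i ^ p) = 0"
    using orth_poly_exists[OF w] by blast
  have P0: "P \<noteq> 0" using lc by auto
  have cR: "card {x. poly P x = 0} = k" by (rule roots_card[OF w inj dP lc orth big])
  obtain h where h: "bij_betw h {0..<k} {x. poly P x = 0}"
    using ex_bij_betw_nat_finite[of "{x. poly P x = 0}"] poly_roots_finite[OF P0] cR by auto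
  have injh: "inj_on h {..<k}" using h by (simp add: bij_betw_def atLeast0LessThan)
  have rooth: "\<forall>j<k. poly P (h j) = 0" using h by (auto simp: bij_betw_def)
  have orthq: "\<And>q. degree q < k \<Longrightarrow> (\<Sum>i\<in>UNIV. w i * poly P (lam i) * poly q (lam i)) = 0"
    using orth_to_poly[OF orth] by blast
  show ?thesis using quad_from_nodes[OF w dP P0 k orthq injh rooth] by blast
qed

lemma GQ_char:
  fixes w lam :: "'n::finite \<Rightarrow> real"
  assumes w: "\<forall>i. 0 \<le> w i" and inj: "inj lam" and k: "0 < k"
  shows "\<exists>d \<theta>. (\<forall>j. 0 \<le> d j) \<and> GQ k (gstep UNIV w lam) = step_dist k d \<theta> \<and> sum d {..<k} = sum w UNIV"
proof -
  obtain d0 \<theta>0 where d0: "\<forall>j. 0 \<le> d0 j"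
    and m0: "\<forall>p<2*k. (\<Sum>j<k. d0 j * \<theta>0 j ^ p) = (\<Sum>i\<in>UNIV. w i * lam i ^ p)"
    using gq_exists[OF w inj k] by blast
  let ?\<mu> = "gstep UNIV w lam"
  have mmu: "moment ?\<mu> p = (\<Sum>i\<in>UNIV. w i * lam i ^ p)" for p
    using w by (intro moment_gstep) auto
  have mst: "moment (step_dist k d \<theta>) p = (\<Sum>j<k. d j * \<theta> j ^ p)" if "\<forall>j. 0 \<le> d j" for d \<theta> p
    unfolding step_dist_gstep using that by (intro moment_gstep) auto
  have "GQ k ?\<mu> = step_dist k d0 \<theta>0"
    unfolding GQ_def
  proof (rule the_equality)
    show "(\<exists>d \<theta>. (\<forall>j. 0 \<le> d j) \<and> step_dist k d0 \<theta>0 = step_dist k d \<theta>) \<and>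
          (\<forall>p<2 * k. moment (step_dist k d0 \<theta>0) p = moment ?\<mu> p)"
      using d0 m0 mst[OF d0] mmu by auto
  next
    fix G assume G: "(\<exists>d \<theta>. (\<forall>j. 0 \<le> d j) \<and> G = step_dist k d \<theta>) \<and> (\<forall>p<2 * k. moment G p = moment ?\<mu> p)"
    then obtain d \<theta> where d: "\<forall>j. 0 \<le> d j" and Gd: "G = step_dist k d \<theta>" by blast
    have "\<forall>p<2*k. (\<Sum>j<k. d j * \<theta> j ^ p) = (\<Sum>j<k. d0 j * \<theta>0 j ^ p)"
      using G Gd mst[OF d] mmu m0 by auto
    then show "G = step_dist k d0 \<theta>0" using Gd step_unique by blast
  qed
  moreover have "sum d0 {..<k} = sum w UNIV" using m0[rule_format, of 0] k by simp
  ultimately show ?thesis using d0 by blast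
qed




definition diagm :: "('n::finite \<Rightarrow> real) \<Rightarrow> real^'n^'n" where
  "diagm lam = (\<chi> i j. if i = j then lam i else 0)"

lemma diagm_sym: "sym_mat (diagm lam)"
  unfolding sym_mat_def diagm_def transpose_def by (simp add: vec_eq_iff)

lemma diagm_mulv: "(diagm lam *v u) $ j = lam j * u $ j"
proof -
  have "(diagm lam *v u) $ j = (\<Sum>i\<in>UNIV. (if j = i then lam j else 0) * u $ i)"
    unfolding diagm_def matrix_vector_mult_def by simp
  also have "\<dots> = (\<Sum>i\<in>UNIV. (if j = i then lam j * u $ i else 0))"
    by (intro sum.cong) auto
  also have "\<dots> = lam j * u $ j" by simp
  finally show ?thesis .
qed

lemma diagm_eig_list:
  fixes lam :: "'n::finite \<Rightarrow> real"
  shows "is_eig_list (diagm lam) lam"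
  unfolding is_eig_list_def
proof (intro exI[of _ "\<lambda>i. axis i 1"] conjI allI)
  fix i j :: 'n
  show "axis i (1::real) \<bullet> axis j 1 = (if i = j then 1 else 0)" by (simp add: inner_axis_axis)
  show "diagm lam *v axis i 1 = lam i *\<^sub>R axis i 1" by (simp add: vec_eq_iff diagm_mulv axis_def)
qed

lemma eig_perm:
  fixes lam :: "'n::finite \<Rightarrow> real"
  assumes inj: "inj lam" and E: "is_eig_list (diagm lam) mu"
  shows "\<exists>\<sigma>. bij \<sigma> \<and> (\<forall>i. mu i = lam (\<sigma> i))"
proof -
  obtain U :: "'n \<Rightarrow> real^'n" where on: "\<forall>i j. U i \<bullet> U j = (if i = j then 1 else 0)"
    and ev: "\<forall>i. diagm lam *v U i = mu i *\<^sub>R U i"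
    using E unfolding is_eig_list_def by blast
  have comp: "lam j * U i $ j = mu i * U i $ j" for i j
    using arg_cong[OF ev[rule_format, of i], of "\<lambda>v. v $ j"] by (simp add: diagm_mulv)
  have nz: "\<exists>j. U i $ j \<noteq> 0" for i
  proof (rule ccontr)
    assume "\<not> (\<exists>j. U i $ j \<noteq> 0)"
    then have "U i = 0" by (simp add: vec_eq_iff)
    then show False using on[rule_format, of i i] by simp
  qed
  define \<sigma> where "\<sigma> i = (SOME j. U i $ j \<noteq> 0)" for i
  have s1: "U i $ \<sigma> i \<noteq> 0" for i unfolding \<sigma>_def using nz by (rule someI_ex)
  have mus: "mu i = lam (\<sigma> i)" for i using comp[of "\<sigma> i" i] s1[of i] by simp
  have supp: "U i $ j = 0" if "j \<noteq> \<sigma> i" for i j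
  proof (rule ccontr)
    assume "U i $ j \<noteq> 0"
    then have "lam j = mu i" using comp[of j i] by simp
    then have "lam j = lam (\<sigma> i)" using mus by simp
    then show False using inj that by (auto dest: injD)
  qed
  have "inj \<sigma>"
  proof (rule injI)
    fix i i' assume eq: "\<sigma> i = \<sigma> i'"
    have "U i \<bullet> U i' = (\<Sum>j\<in>UNIV. U i $ j * U i' $ j)" unfolding inner_vec_def by simp
    also have "\<dots> = (\<Sum>j\<in>UNIV. if j = \<sigma> i then U i $ \<sigma> i * U i' $ \<sigma> i else 0)"
      by (intro sum.cong refl) (use supp eq in auto)
    also have "\<dots> = U i $ \<sigma> i * U i' $ \<sigma> i" by simp
    finally have "U i \<bullet> U i' \<noteq> 0" using s1[of i] s1[of i'] eq by simp
    then show "i = i'" using on by (metis)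
  qed
  then have "bij \<sigma>" using finite_UNIV_inj_surj[of \<sigma>] by (simp add: bij_def)
  then show ?thesis using mus by blast
qed

lemma eigvals_diagm:
  fixes lam :: "'n::finite \<Rightarrow> real"
  assumes inj: "inj lam"
  shows "card {i. eigvals (diagm lam) i \<le> x} = card {i. lam i \<le> x}"
    and "range (eigvals (diagm lam)) = range lam"
proof -
  have E: "is_eig_list (diagm lam) (eigvals (diagm lam))"
    unfolding eigvals_def by (rule someI[of _ lam]) (rule diagm_eig_list)
  obtain \<sigma> where b: "bij \<sigma>" and m: "\<forall>i. eigvals (diagm lam) i = lam (\<sigma> i)"
    using eig_perm[OF inj E] by blast
  have eq: "{i. eigvals (diagm lam) i \<le> x} = \<sigma> -` {i. lam i \<le> x}" using m by auto
  have c: "card (\<sigma> -` {i. lam i \<le> x}) = card {i. lam i \<le> x}"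
    by (rule card_vimage_inj) (use b in \<open>auto simp: bij_def\<close>)
  show "card {i. eigvals (diagm lam) i \<le> x} = card {i. lam i \<le> x}"
    unfolding eq by (rule c)
  have "range (eigvals (diagm lam)) = lam ` range \<sigma>" using m by (auto simp: image_def)
  then show "range (eigvals (diagm lam)) = range lam" using b by (simp add: bij_def)
qed

lemma orth_proj_eq:
  fixes S :: "(real^'n) set"
  assumes S: "subspace S" and w: "w \<in> S" and o: "\<forall>u\<in>S. (v - w) \<bullet> u = 0"
  shows "orth_proj S v = w"
  unfolding orth_proj_def
proof (rule the_equality)
  show "w \<in> S \<and> (\<forall>u\<in>S. (v - w) \<bullet> u = 0)" using w o by blast
next
  fix w' assume w': "w' \<in> S \<and> (\<forall>u\<in>S. (v - w') \<bullet> u = 0)"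
  have d: "w - w' \<in> S" using S w w' by (simp add: subspace_diff)
  have "(w - w') \<bullet> (w - w') = (v - w') \<bullet> (w - w') - (v - w) \<bullet> (w - w')"
    by (simp add: inner_diff_left)
  also have "\<dots> = 0" using d w' o by simp
  finally show "w' = w" by simp
qed

lemma WCESM_diagm:
  fixes lam :: "'n::finite \<Rightarrow> real"
  assumes inj: "inj lam"
  shows "WCESM (diagm lam) v = gstep UNIV (\<lambda>i. (v $ i)^2) lam"
proof
  fix x
  define E where "E = {u. \<exists>l\<le>x. diagm lam *v u = l *\<^sub>R u}"
  define wv where "wv = (\<chi> i. if lam i \<le> x then v $ i else 0)"
  have ax: "axis i 1 \<in> E" if "lam i \<le> x" for i
    unfolding E_def using that by (intro CollectI exI[of _ "lam i"]) (auto simp: vec_eq_iff diagm_mulv axis_def)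
  have comp: "(\<Sum>i\<in>UNIV. c i *\<^sub>R axis i (1::real)) $ j = c j" for c :: "'n \<Rightarrow> real" and j
  proof -
    have "(\<Sum>i\<in>UNIV. c i *\<^sub>R axis i (1::real)) $ j = (\<Sum>i\<in>UNIV. c i * (axis i (1::real) $ j))"
      by (simp add: sum_component)
    also have "\<dots> = (\<Sum>i\<in>UNIV. if i = j then c j else 0)"
      by (intro sum.cong refl) (simp add: axis_def)
    also have "\<dots> = c j" by simp
    finally show ?thesis .
  qed
  have wsum: "wv = (\<Sum>i\<in>UNIV. (if lam i \<le> x then v $ i else 0) *\<^sub>R axis i 1)"
    unfolding wv_def vec_eq_iff comp by simp
  have wS: "wv \<in> span E"
    unfolding wsum
  proof (rule span_sum)
    fix i
    show "(if lam i \<le> x then v $ i else 0) *\<^sub>R axis i (1::real) \<in> span E"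
      by (cases "lam i \<le> x") (auto intro: span_scale span_base ax span_zero)
  qed
  have oE: "orthogonal (v - wv) u" if "u \<in> E" for u
  proof -
    obtain l where l: "l \<le> x" "diagm lam *v u = l *\<^sub>R u" using \<open>u \<in> E\<close> unfolding E_def by blast
    have c: "lam j * u $ j = l * u $ j" for j using arg_cong[OF l(2), of "\<lambda>v. v $ j"] by (simp add: diagm_mulv)
    have t: "(v - wv) $ j * u $ j = 0" for j
    proof (cases "lam j \<le> x")
      case True then show ?thesis by (simp add: wv_def)
    next
      case False
      then have "lam j \<noteq> l" using l by linarith
      then have "u $ j = 0" using c[of j] by simp
      then show ?thesis by simp
    qed
    show ?thesis unfolding orthogonal_def inner_vec_def inner_real_def by (rule sum.neutral) (use t in blast)
  qed
  have o: "\<forall>u\<in>span E. (v - wv) \<bullet> u = 0"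
    using orthogonal_to_span[OF _ oE] unfolding orthogonal_def by blast
  have "orth_proj (eig_le_space (diagm lam) x) v = wv"
    unfolding eig_le_space_def E_def[symmetric]
    by (rule orth_proj_eq[OF subspace_span wS o])
  then have "WCESM (diagm lam) v x = v \<bullet> wv" unfolding WCESM_def by simp
  also have "\<dots> = gstep UNIV (\<lambda>i. (v $ i)^2) lam x"
    unfolding inner_vec_def gstep_def wv_def by (intro sum.cong refl) (simp add: power2_eq_square)
  finally show "WCESM (diagm lam) v x = gstep UNIV (\<lambda>i. (v $ i)^2) lam x" .
qed




lemma gstep_const: "finite J \<Longrightarrow> gstep J (\<lambda>_. c) a x = c * real (card {j\<in>J. a j \<le> x})"
  unfolding gstep_def by (simp add: sum.inter_filter[symmetric] if_distrib cong: if_cong)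

lemma gstep_meas[measurable]: "gstep J w a \<in> borel_measurable borel"
  unfolding gstep_def by measurable

lemma gstep_abs_le: "\<bar>gstep J w a x\<bar> \<le> (\<Sum>j\<in>J. \<bar>w j\<bar>)"
  unfolding gstep_def by (rule order_trans[OF sum_abs]) (intro sum_mono, simp)

lemma ind_int: "l \<le> u \<Longrightarrow> integral\<^sup>L lborel (indicator {l..<u} :: real \<Rightarrow> real) = u - l"
  by (simp add: Bochner_Integration.integral_indicator)

lemma ind_integrable: "integrable lborel (indicator {l..<u} :: real \<Rightarrow> real)"
proof (cases "l \<le> u")
  case True
  then show ?thesis by (intro integrable_real_indicator) auto
next
  case False
  then have "{l..<u} = {}" by auto
  then show ?thesis by simp
qed

lemma dW_bound:
  fixes Q :: "'q set" and a b :: "'q \<Rightarrow> real" and n m :: nat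
  assumes n: "0 < n" and finQ: "finite Q" and sa: "sum a Q = 1"
    and m: "card (b ` Q) \<le> m" and nm: "2 * m < n"
  defines "C0 \<equiv> gstep {..<n} (\<lambda>_. 1 / real n) real"
  shows "integral\<^sup>L lborel (\<lambda>x. \<bar>C0 x - gstep Q a b x\<bar>) > 1/4"
proof -
  let ?F = "gstep Q a b"
  define g where "g x = \<bar>C0 x - ?F x\<bar>" for x
  have C0c: "C0 x = real (card {c\<in>{..<n}. real c \<le> x}) / real n" for x
    unfolding C0_def by (simp add: gstep_const)
  define L0 where "L0 = Min (insert 0 (b ` Q)) - 1"
  define R0 where "R0 = Max (insert (real n) (b ` Q))"
  define B where "B = 1 + (\<Sum>q\<in>Q. \<bar>a q\<bar>)"
  have gz: "g x = 0" if "x \<notin> {L0..R0}" for x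
  proof (cases "x < L0")
    case True
    have "\<forall>q\<in>Q. x < b q"
    proof
      fix q assume "q \<in> Q"
      then have "Min (insert 0 (b ` Q)) \<le> b q" using finQ by (intro Min_le) auto
      then show "x < b q" using True unfolding L0_def by linarith
    qed
    then have "?F x = 0" using gstep_below finQ by blast
    moreover have "Min (insert 0 (b ` Q)) \<le> 0" using finQ by (intro Min_le) auto
    then have "\<forall>c\<in>{..<n}. x < real c" using True unfolding L0_def by auto
    then have "C0 x = 0" unfolding C0_def using gstep_below by blast
    ultimately show ?thesis unfolding g_def by simp
  next
    case False
    then have xR: "R0 < x" using that by auto
    have "\<forall>q\<in>Q. b q \<le> x"
    proof
      fix q assume "q \<in> Q"
      then have "b q \<le> R0" unfolding R0_def using finQ by (intro Max_ge) auto
      then show "b q \<le> x" using xR by linarith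
    qed
    then have "?F x = 1" using gstep_above finQ sa by metis
    moreover have "real n \<le> R0" unfolding R0_def using finQ by (intro Max_ge) auto
    then have "\<forall>c\<in>{..<n}. real c \<le> x" using xR by auto
    then have "C0 x = 1" unfolding C0_def using gstep_above[of "{..<n}" real x "\<lambda>_. 1 / real n"] n by simp
    ultimately show ?thesis unfolding g_def by simp
  qed
  have gB: "g x \<le> B" for x
  proof -
    have "\<bar>C0 x\<bar> \<le> (\<Sum>c<n. \<bar>1 / real n\<bar>)" unfolding C0_def by (rule gstep_abs_le)
    also have "\<dots> = 1" using n by simp
    finally have "\<bar>C0 x\<bar> \<le> 1" .
    moreover have "\<bar>?F x\<bar> \<le> (\<Sum>q\<in>Q. \<bar>a q\<bar>)" by (rule gstep_abs_le)
    ultimately show ?thesis unfolding g_def B_def by linarith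
  qed
  have intg: "integrable lborel g"
  proof (rule Bochner_Integration.integrable_bound)
    show "integrable lborel (\<lambda>x. B * indicator {L0..R0} x :: real)"
      by (intro integrable_mult_right integrable_real_indicator) (auto, cases "L0 \<le> R0", auto)
    show "g \<in> borel_measurable lborel" unfolding g_def C0_def by measurable
    show "AE x in lborel. norm (g x) \<le> norm (B * indicator {L0..R0} x :: real)"
    proof (intro AE_I2)
      fix x
      have "0 \<le> g x" unfolding g_def by simp
      moreover have "0 \<le> B" unfolding B_def by (intro add_nonneg_nonneg sum_nonneg) auto
      ultimately show "norm (g x) \<le> norm (B * indicator {L0..R0} x :: real)"
        using gB[of x] gz[of x] by (cases "x \<in> {L0..R0}") auto
    qed
  qed
  define J where "J c = {real c - 1/2 ..< real c + 1/2}" for c :: nat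
  define Good where "Good = {c\<in>{..<n}. \<forall>q\<in>Q. b q \<notin> {real c - 1/2 <..< real c + 1/2}}"
  define al where "al c = \<bar>real c / real n - ?F (real c)\<bar>" for c :: nat
  define be where "be c = \<bar>(real c + 1) / real n - ?F (real c)\<bar>" for c :: nat
  define lo where "lo x = (\<Sum>c\<in>Good. al c * indicator {real c - 1/2 ..< real c} x + be c * indicator {real c ..< real c + 1/2} x)" for x
  have Fconst: "?F x = ?F (real c)" if "c \<in> Good" "x \<in> J c" for c x
    unfolding gstep_def
  proof (intro sum.cong refl)
    fix q assume "q \<in> Q"
    then have "b q \<notin> {real c - 1/2 <..< real c + 1/2}" using that Good_def by blast
    then have "(b q \<le> x) = (b q \<le> real c)" using that(2) unfolding J_def by auto
    then show "a q * (if b q \<le> x then 1 else 0) = a q * (if b q \<le> real c then 1 else 0)" by simp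
  qed
  have Cleft: "C0 x = real c / real n" if "c < n" "real c - 1/2 \<le> x" "x < real c" for c x
  proof -
    have "{m\<in>{..<n}. real m \<le> x} = {..<c}"
    proof (intro set_eqI iffI)
      fix m assume "m \<in> {m\<in>{..<n}. real m \<le> x}"
      then have "real m < real c" using that by auto
      then show "m \<in> {..<c}" by simp
    next
      fix m assume "m \<in> {..<c}"
      then have "real m + 1 \<le> real c" by simp
      then show "m \<in> {m\<in>{..<n}. real m \<le> x}" using that \<open>m \<in> {..<c}\<close> by auto
    qed
    then show ?thesis unfolding C0c by simp
  qed
  have Cright: "C0 x = (real c + 1) / real n" if "c < n" "real c \<le> x" "x < real c + 1/2" for c x
  proof -
    have "{m\<in>{..<n}. real m \<le> x} = {..c}"
    proof (intro set_eqI iffI)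
      fix m assume "m \<in> {m\<in>{..<n}. real m \<le> x}"
      then have "real m < real c + 1" using that by auto
      then show "m \<in> {..c}" by simp
    next
      fix m assume "m \<in> {..c}"
      then have "real m \<le> real c" by simp
      then show "m \<in> {m\<in>{..<n}. real m \<le> x}" using that \<open>m \<in> {..c}\<close> by auto
    qed
    then show ?thesis unfolding C0c by simp
  qed
  have trm: "al c * indicator {real c - 1/2 ..< real c} x + be c * indicator {real c ..< real c + 1/2} x
      = indicator (J c) x * g x" if "c \<in> Good" for c x
  proof -
    have cn: "c < n" using that Good_def by auto
    consider "x < real c - 1/2" | "real c - 1/2 \<le> x" "x < real c" | "real c \<le> x" "x < real c + 1/2" | "real c + 1/2 \<le> x"
      by linarith
    then show ?thesis
    proof cases
      case 1 then show ?thesis by (simp add: J_def indicator_def)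
    next
      case 2
      then have "x \<in> J c" unfolding J_def by auto
      moreover have i1: "indicator {real c - 1/2..<real c} x = (1::real)" using 2 by (simp add: indicator_def)
      moreover have i2: "indicator {real c..<real c + 1/2} x = (0::real)" using 2 by (simp add: indicator_def)
      moreover have i3: "indicator (J c) x = (1::real)" using \<open>x \<in> J c\<close> by simp
      moreover have "g x = al c" unfolding g_def al_def using Fconst[OF that \<open>x \<in> J c\<close>] Cleft[OF cn 2] by simp
      ultimately show ?thesis by simp
    next
      case 3
      then have "x \<in> J c" unfolding J_def by auto
      moreover have i1: "indicator {real c..<real c + 1/2} x = (1::real)" using 3 by (simp add: indicator_def)
      moreover have i2: "indicator {real c - 1/2..<real c} x = (0::real)" using 3 by (simp add: indicator_def)
      moreover have i3: "indicator (J c) x = (1::real)" using \<open>x \<in> J c\<close> by simp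
      moreover have "g x = be c" unfolding g_def be_def using Fconst[OF that \<open>x \<in> J c\<close>] Cright[OF cn 3] by simp
      ultimately show ?thesis by simp
    next
      case 4 then show ?thesis by (simp add: J_def indicator_def)
    qed
  qed
  have finG: "finite Good" unfolding Good_def by auto
  have lo_le: "lo x \<le> g x" for x
  proof -
    have "lo x = (\<Sum>c\<in>Good. indicator (J c) x * g x)" unfolding lo_def using trm by simp
    also have "\<dots> = g x * real (card {c\<in>Good. x \<in> J c})"
    proof -
      have e: "Good \<inter> {c. x \<in> J c} = {c\<in>Good. x \<in> J c}" by auto
      show ?thesis using finG by (simp add: sum.inter_filter[symmetric] indicator_def mult.commute if_distrib e cong: if_cong)
    qed
    also have "\<dots> \<le> g x * 1"
    proof (rule mult_left_mono)
      have "card {c\<in>Good. x \<in> J c} \<le> Suc 0"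
        unfolding card_le_Suc0_iff_eq[OF finite_subset[OF _ finG], of "{c\<in>Good. x \<in> J c}", simplified]
      proof (intro allI impI)
        fix c1 c2 assume "c1 \<in> Good \<and> x \<in> J c1" "c2 \<in> Good \<and> x \<in> J c2"
        then have "real c1 < real c2 + 1" "real c2 < real c1 + 1" unfolding J_def by auto
        then show "c1 = c2" by linarith
      qed
      then show "real (card {c\<in>Good. x \<in> J c}) \<le> 1" by simp
      show "0 \<le> g x" unfolding g_def by simp
    qed
    finally show ?thesis by simp
  qed
  have intlo: "integrable lborel lo"
    unfolding lo_def by (intro Bochner_Integration.integrable_sum Bochner_Integration.integrable_add Bochner_Integration.integrable_mult_right ind_integrable)
  have "integral\<^sup>L lborel lo = (\<Sum>c\<in>Good. al c * (1/2) + be c * (1/2))"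
    unfolding lo_def
    by (subst Bochner_Integration.integral_sum, intro Bochner_Integration.integrable_add Bochner_Integration.integrable_mult_right ind_integrable)
       (intro sum.cong refl, subst Bochner_Integration.integral_add, (intro Bochner_Integration.integrable_mult_right ind_integrable)+, simp add: ind_int)
  also have "\<dots> \<ge> (\<Sum>c\<in>Good. 1 / (2 * real n))"
  proof (rule sum_mono)
    fix c assume "c \<in> Good"
    have "\<bar>(real c + 1) / real n - real c / real n\<bar> \<le> al c + be c"
      unfolding al_def be_def by linarith
    moreover have "(real c + 1) / real n - real c / real n = 1 / real n" by (simp add: diff_divide_distrib[symmetric])
    ultimately have "1 / real n \<le> al c + be c" by simp
    then show "1 / (2 * real n) \<le> al c * (1/2) + be c * (1/2)" by simp
  qed
  finally have I1: "integral\<^sup>L lborel lo \<ge> real (card Good) / (2 * real n)" by simp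
  have bad: "{..<n} - Good \<subseteq> (\<lambda>y. nat \<lfloor>y + 1/2\<rfloor>) ` (b ` Q)"
  proof
    fix c assume "c \<in> {..<n} - Good"
    then obtain q where q: "q \<in> Q" "b q \<in> {real c - 1/2 <..< real c + 1/2}" unfolding Good_def by auto
    then have "\<lfloor>b q + 1/2\<rfloor> = int c" by (subst floor_eq_iff) auto
    then show "c \<in> (\<lambda>y. nat \<lfloor>y + 1/2\<rfloor>) ` (b ` Q)" using q by force
  qed
  have "card ({..<n} - Good) \<le> card ((\<lambda>y. nat \<lfloor>y + 1/2\<rfloor>) ` (b ` Q))"
    using finQ by (intro card_mono[OF _ bad]) auto
  also have "\<dots> \<le> card (b ` Q)" using finQ by (intro card_image_le) auto
  finally have cb: "card ({..<n} - Good) \<le> m" using m by linarith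
  have "n \<le> card Good + card ({..<n} - Good)"
  proof -
    have "card {..<n} \<le> card (Good \<union> ({..<n} - Good))" using finG by (intro card_mono) auto
    also have "\<dots> \<le> card Good + card ({..<n} - Good)" by (rule card_Un_le)
    finally show ?thesis by simp
  qed
  then have cG: "n - m \<le> card Good" using cb by linarith
  have "real (card Good) / (2 * real n) > 1/4"
  proof -
    have "real n < 2 * real (card Good)" using cG nm by linarith
    then show ?thesis using n by (simp add: field_simps)
  qed
  moreover have "integral\<^sup>L lborel lo \<le> integral\<^sup>L lborel g"
    by (rule integral_mono[OF intlo intg]) (rule lo_le)
  ultimately show ?thesis using I1 unfolding g_def by linarith
qed




theorem theorem4:
  fixes t :: real
  assumes "0 < t" and "t < 1"
    and "CARD('n::finite) = nat \<lceil>1 / (4 * t)\<rceil>"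
  shows "\<exists>A :: real^'n^'n. sym_mat A \<and>
     (\<forall>(nv::nat) (k::nat) (v :: nat \<Rightarrow> real^'n).
        0 < nv \<longrightarrow> 0 < k \<longrightarrow> real (nv * k) < 1 / (8 * t) \<longrightarrow>
        (\<forall>i\<in>{1..nv}. norm (v i) = 1) \<longrightarrow>
        dW (CESM A) (\<lambda>x. (1 / real nv) * (\<Sum>i=1..nv. GQ k (WCESM A (v i)) x))
          > t * \<bar>lam_max A - lam_min A\<bar>)"
proof -
  note t = assms(1,2)
  define n where "n = CARD('n)"
  have n0: "0 < n" unfolding n_def by simp
  have nreal: "real n = of_int \<lceil>1 / (4 * t)\<rceil>" unfolding n_def assms(3) using t by simp
  have n_lo: "1 / (4 * t) \<le> real n" unfolding nreal by (rule le_of_int_ceiling)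
  have n_hi: "real n < 1 / (4 * t) + 1" unfolding nreal by linarith
  obtain h :: "'n \<Rightarrow> nat" where h: "bij_betw h UNIV {0..<n}"
    using ex_bij_betw_finite_nat[of "UNIV :: 'n set"] unfolding n_def by auto
  define lam where "lam i = real (h i)" for i
  have injh: "inj h" using h by (simp add: bij_betw_def)
  have inj: "inj lam" unfolding lam_def using injh by (auto simp: inj_def)
  define A :: "real^'n^'n" where "A = diagm lam"
  have C: "CESM A = gstep {..<n} (\<lambda>_. 1 / real n) real"
  proof
    fix x
    have "card {i. eigvals A i \<le> x} = card {i. lam i \<le> x}"
      unfolding A_def by (rule eigvals_diagm(1)[OF inj])
    also have "\<dots> = card (h ` {i. lam i \<le> x})" using injh by (simp add: card_image inj_on_def inj_def)
    also have "h ` {i. lam i \<le> x} = {j\<in>{..<n}. real j \<le> x}"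
      using h unfolding lam_def bij_betw_def by (auto simp: atLeast0LessThan)
    finally show "CESM A x = gstep {..<n} (\<lambda>_. 1 / real n) real x"
      unfolding CESM_def n_def[symmetric] by (simp add: gstep_const)
  qed
  have rng: "range (eigvals A) = range lam" unfolding A_def by (rule eigvals_diagm(2)[OF inj])
  have lam_rng: "0 \<le> lam i \<and> lam i \<le> real n - 1" for i
  proof -
    have "h i < n" using h by (auto simp: bij_betw_def)
    then show ?thesis unfolding lam_def by linarith
  qed
  have Iub: "\<bar>lam_max A - lam_min A\<bar> \<le> real n - 1"
  proof -
    have "lam_max A \<in> range lam" unfolding lam_max_def rng by (rule Max_in) auto
    moreover have "lam_min A \<in> range lam" unfolding lam_min_def rng by (rule Min_in) auto
    ultimately obtain i1 i2 where "lam_max A = lam i1" "lam_min A = lam i2" by auto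
    then show ?thesis using lam_rng[of i1] lam_rng[of i2] by (simp add: abs_le_iff)
  qed
  have rhs: "t * \<bar>lam_max A - lam_min A\<bar> < 1/4"
  proof -
    have "t * \<bar>lam_max A - lam_min A\<bar> \<le> t * (real n - 1)" using Iub t by (intro mult_left_mono) auto
    also have "\<dots> < t * (1 / (4 * t))" using n_hi t by (intro mult_strict_left_mono) auto
    also have "\<dots> = 1/4" using t by simp
    finally show ?thesis .
  qed
  show ?thesis
  proof (intro exI[of _ A] conjI allI impI)
    show "sym_mat A" unfolding A_def by (rule diagm_sym)
  next
    fix nv k :: nat and v :: "nat \<Rightarrow> real^'n"
    assume nv: "0 < nv" and k: "0 < k" and cond: "real (nv * k) < 1 / (8 * t)"
      and un: "\<forall>i\<in>{1..nv}. norm (v i) = 1"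
    have ex: "\<forall>i\<in>{1..nv}. \<exists>p. (\<forall>j. 0 \<le> fst p j) \<and> GQ k (WCESM A (v i)) = step_dist k (fst p) (snd p)
                 \<and> sum (fst p) {..<k} = 1"
    proof
      fix i assume i: "i \<in> {1..nv}"
      have w: "\<forall>j. 0 \<le> (v i $ j)^2" by simp
      have W: "WCESM A (v i) = gstep UNIV (\<lambda>j. (v i $ j)^2) lam"
        unfolding A_def by (rule WCESM_diagm[OF inj])
      have s1: "(\<Sum>j\<in>UNIV. (v i $ j)^2) = 1"
      proof -
        have "(norm (v i))^2 = v i \<bullet> v i" by (rule power2_norm_eq_inner)
        also have "\<dots> = (\<Sum>j\<in>UNIV. (v i $ j)^2)" unfolding inner_vec_def by (simp add: power2_eq_square)
        finally show ?thesis using un i by simp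
      qed
      obtain d \<theta> where "\<forall>j. 0 \<le> d j" "GQ k (gstep UNIV (\<lambda>j. (v i $ j)^2) lam) = step_dist k d \<theta>"
        "sum d {..<k} = (\<Sum>j\<in>UNIV. (v i $ j)^2)"
        using GQ_char[OF w inj k] by blast
      then show "\<exists>p. (\<forall>j. 0 \<le> fst p j) \<and> GQ k (WCESM A (v i)) = step_dist k (fst p) (snd p)
                 \<and> sum (fst p) {..<k} = 1"
        using W s1 by (intro exI[of _ "(d, \<theta>)"]) simp
    qed
    then obtain f where f: "\<forall>i\<in>{1..nv}. (\<forall>j. 0 \<le> fst (f i) j) \<and> GQ k (WCESM A (v i)) = step_dist k (fst (f i)) (snd (f i))
                 \<and> sum (fst (f i)) {..<k} = 1"
      by (metis bchoice)
    define Q where "Q = {1..nv} \<times> {..<k}"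
    define a where "a = (\<lambda>(i, j). fst (f i) j / real nv)"
    define b where "b = (\<lambda>(i, j). snd (f i) j)"
    have finQ: "finite Q" unfolding Q_def by simp
    have F: "(\<lambda>x. (1 / real nv) * (\<Sum>i=1..nv. GQ k (WCESM A (v i)) x)) = gstep Q a b"
    proof
      fix x
      have "(1 / real nv) * (\<Sum>i=1..nv. GQ k (WCESM A (v i)) x)
          = (1 / real nv) * (\<Sum>i=1..nv. \<Sum>j<k. fst (f i) j * (if snd (f i) j \<le> x then 1 else 0))"
        using f by (simp add: step_dist_def)
      also have "\<dots> = (\<Sum>i=1..nv. \<Sum>j<k. fst (f i) j / real nv * (if snd (f i) j \<le> x then 1 else 0))"
        by (simp add: sum_distrib_left)
      also have "\<dots> = gstep Q a b x"
        unfolding gstep_def Q_def a_def b_def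
        by (simp add: sum.cartesian_product) (intro sum.cong refl, auto)
      finally show "(1 / real nv) * (\<Sum>i=1..nv. GQ k (WCESM A (v i)) x) = gstep Q a b x" .
    qed
    have sa: "sum a Q = 1"
    proof -
      have "sum a Q = (\<Sum>i=1..nv. \<Sum>j<k. fst (f i) j / real nv)"
        unfolding Q_def a_def by (simp add: sum.cartesian_product)
      also have "\<dots> = (\<Sum>i=1..nv. 1 / real nv)"
        using f by (intro sum.cong refl) (simp add: sum_divide_distrib[symmetric])
      also have "\<dots> = 1" using nv by simp
      finally show ?thesis .
    qed
    have mQ: "card (b ` Q) \<le> nv * k"
    proof -
      have "card (b ` Q) \<le> card Q" using finQ by (rule card_image_le)
      also have "\<dots> = nv * k" unfolding Q_def by (simp add: card_cartesian_product)
      finally show ?thesis .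
    qed
    have nm: "2 * (nv * k) < n"
    proof -
      have "real (2 * (nv * k)) < 2 * (1 / (8 * t))" using cond by simp
      also have "\<dots> = 1 / (4 * t)" by simp
      finally show ?thesis using n_lo by linarith
    qed
    have "dW (CESM A) (\<lambda>x. (1 / real nv) * (\<Sum>i=1..nv. GQ k (WCESM A (v i)) x)) > 1/4"
      unfolding dW_def F C using dW_bound[OF n0 finQ sa mQ nm] by simp
    then show "dW (CESM A) (\<lambda>x. (1 / real nv) * (\<Sum>i=1..nv. GQ k (WCESM A (v i)) x))
          > t * \<bar>lam_max A - lam_min A\<bar>" using rhs by linarith
  qed
qed


end
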